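(* Let $V$ be a finite-dimensional real vector space and $P\subseteq V$ a polytope with $*P=P$. Then in $\mathcal{P}(V)$ \[ \sum_{F\in\mathcal{F}(P),\,F\ne P}(-1)^{\dim F}\cdot F=\begin{cases}0,&\dim P\text{ odd},\\ -2\cdot P,&\dim P\text{ even}.\end{cases}\]
   Context: A polytope in $V$ is the convex hull of a nonempty finite set; $\mathcal{P}(V)$ is the Grothendieck group of the monoid of polytopes in $V$ under Minkowski sum. $*P=\{-p:p\in P\}$. A face of $P$ is a set $F_\phi(P)=\{p\in P:\phi(p)=\max_{q\in P}\phi(q)\}$ for some linear $\phi:V\to\mathbb{R}$; $\mathcal{F}(P)$ is the set of faces of $P$, including $P$ itself. *)

theory Defs
  imports "HOL-Analysis.Analysis"
begin

text \<open>Polytopes: convex hulls of nonempty finite sets. Minkowski sum is the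
  library's pointwise set addition (HOL-Library.Set_Algebras), with neutral element {0}.\<close>

definition ptope :: "'a::euclidean_space set \<Rightarrow> bool" where
  "ptope P \<longleftrightarrow> (\<exists>S. finite S \<and> S \<noteq> {} \<and> P = convex hull S)"

lemma ptope_zero: "ptope ({0} :: 'a::euclidean_space set)"
  unfolding ptope_def by (rule exI[of _ "{0}"]) simp

lemma ex_ptope: "Ex (ptope :: 'a::euclidean_space set \<Rightarrow> bool)"
  using ptope_zero by blast

lemma ptope_plus:
  assumes "ptope A" "ptope B" shows "ptope (A + B)"
proof -
  obtain S T where S: "finite S" "S \<noteq> {}" "A = convex hull S"
    and T: "finite T" "T \<noteq> {}" "B = convex hull T"
    using assms unfolding ptope_def by blast
  have "A + B = convex hull (S + T)" using S T by (simp add: convex_hull_set_plus)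
  moreover have "finite (S + T)" using S T by (simp add: finite_set_plus)
  moreover have "S + T \<noteq> {}" using S T by (auto simp: set_plus_def)
  ultimately show ?thesis unfolding ptope_def by blast
qed

text \<open>The Grothendieck group: pairs (A,B) of polytopes standing for [A]-[B],
  with (A,B) ~ (C,D) iff A+D+K = C+B+K for some polytope K.\<close>

definition grel :: "('a::euclidean_space set \<times> 'a set) \<Rightarrow> ('a set \<times> 'a set) \<Rightarrow> bool" where
  "grel x y \<longleftrightarrow> ptope (fst x) \<and> ptope (snd x) \<and> ptope (fst y) \<and> ptope (snd y) \<and>
     (\<exists>K. ptope K \<and> fst x + snd y + K = fst y + snd x + K)"

lemma grel_part_equivp: "part_equivp (grel :: ('a::euclidean_space set \<times> 'a set) \<Rightarrow> _)"
proof (rule part_equivpI)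
  show "\<exists>x::'a set \<times> 'a set. grel x x"
    by (rule exI[of _ "({0},{0})"]) (auto simp: grel_def ptope_zero ex_ptope)
  show "symp (grel :: ('a set \<times> 'a set) \<Rightarrow> _)"
    unfolding symp_def grel_def by (metis)
  show "transp (grel :: ('a set \<times> 'a set) \<Rightarrow> _)"
  proof (rule transpI)
    fix x y z :: "'a set \<times> 'a set"
    assume xy: "grel x y" and yz: "grel y z"
    obtain K where K: "ptope K" "fst x + snd y + K = fst y + snd x + K"
      using xy unfolding grel_def by blast
    obtain L where L: "ptope L" "fst y + snd z + L = fst z + snd y + L"
      using yz unfolding grel_def by blast
    define M where "M = fst y + snd y + K + L"
    have "ptope M" unfolding M_def
      using xy K L by (simp add: grel_def ptope_plus)
    have "fst x + snd z + M = (fst x + snd y + K) + (fst y + snd z + L)"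
      unfolding M_def by (simp add: ac_simps)
    also have "\<dots> = (fst y + snd x + K) + (fst z + snd y + L)" using K L by simp
    also have "\<dots> = fst z + snd x + M" unfolding M_def by (simp add: ac_simps)
    finally show "grel x z" using xy yz \<open>ptope M\<close> unfolding grel_def by blast
  qed
qed

quotient_type (overloaded) 'a pgroup = "'a::euclidean_space set \<times> 'a set" / partial: grel
  by (rule grel_part_equivp)

instantiation pgroup :: (euclidean_space) ab_group_add
begin

lift_definition zero_pgroup :: "'a pgroup" is "({0}, {0})"
  by (auto simp: grel_def ptope_zero ex_ptope)

lift_definition plus_pgroup :: "'a pgroup \<Rightarrow> 'a pgroup \<Rightarrow> 'a pgroup"
  is "\<lambda>x y. (fst x + fst y, snd x + snd y)"
proof -
  fix x x' y y' :: "'a set \<times> 'a set"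
  assume xx: "grel x x'" and yy: "grel y y'"
  obtain K where K: "ptope K" "fst x + snd x' + K = fst x' + snd x + K"
    using xx unfolding grel_def by blast
  obtain L where L: "ptope L" "fst y + snd y' + L = fst y' + snd y + L"
    using yy unfolding grel_def by blast
  have "(fst x + fst y) + (snd x' + snd y') + (K + L) = (fst x + snd x' + K) + (fst y + snd y' + L)"
    by (simp add: ac_simps)
  also have "\<dots> = (fst x' + snd x + K) + (fst y' + snd y + L)" using K L by simp
  also have "\<dots> = (fst x' + fst y') + (snd x + snd y) + (K + L)" by (simp add: ac_simps)
  finally show "grel (fst x + fst y, snd x + snd y) (fst x' + fst y', snd x' + snd y')"
    using xx yy K L unfolding grel_def by (auto intro!: ptope_plus)
qed

lift_definition uminus_pgroup :: "'a pgroup \<Rightarrow> 'a pgroup" is "\<lambda>x. (snd x, fst x)"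
  unfolding grel_def by (auto simp: ac_simps)

definition minus_pgroup :: "'a pgroup \<Rightarrow> 'a pgroup \<Rightarrow> 'a pgroup" where
  "minus_pgroup a b = a + - b"

instance
proof
  fix a b c :: "'a pgroup"
  show "a + b + c = a + (b + c)"
    by transfer (auto simp: grel_def ptope_plus ac_simps intro!: exI[of _ "{0}"] ptope_zero)
  show "a + b = b + a"
    by transfer (auto simp: grel_def ptope_plus ac_simps intro!: exI[of _ "{0}"] ptope_zero)
  show "0 + a = a"
    by transfer (auto simp: grel_def ptope_plus ac_simps intro!: exI[of _ "{0}"] ptope_zero)
  show "- a + a = 0"
    by transfer (auto simp: grel_def ptope_plus ac_simps ptope_zero)
  show "a - b = a + - b" by (simp add: minus_pgroup_def)
qed

end

lift_definition pclass :: "'a::euclidean_space set \<Rightarrow> 'a pgroup"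
  is "\<lambda>P. if ptope P then (P, {0}) else ({0}, {0})"
  by (auto simp: grel_def ptope_zero intro!: exI[of _ "{0}"])

text \<open>Faces F_phi(P) for linear phi (including P itself, for phi = 0).\<close>

definition faces :: "'a::euclidean_space set \<Rightarrow> 'a set set" where
  "faces P = {F. \<exists>\<phi>::'a \<Rightarrow> real. linear \<phi> \<and> F = {p \<in> P. \<forall>q \<in> P. \<phi> q \<le> \<phi> p}}"

end

theory Submission
  imports Defs
begin

lemma avoid_orth:
  fixes D :: "'a::euclidean_space set"
  assumes "finite D" "0 \<notin> D"
  shows "\<exists>w. \<forall>d\<in>D. inner w d \<noteq> 0"
  using assms
proof (induction D rule: finite_induct)
  case empty then show ?case by simp
next
  case (insert d D)
  then obtain w where w: "\<forall>e\<in>D. inner w e \<noteq> 0" by auto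
  have d0: "d \<noteq> 0" using insert by auto
  let ?B = "(\<lambda>e. - inner w e / inner d e) ` (insert d D)"
  have "finite ?B" using insert by simp
  then obtain t :: real where t: "t \<notin> ?B"
    using ex_new_if_finite[OF infinite_UNIV_char_0] by blast
  have "\<forall>e\<in>insert d D. inner (w + t *\<^sub>R d) e \<noteq> 0"
  proof
    fix e assume e: "e \<in> insert d D"
    show "inner (w + t *\<^sub>R d) e \<noteq> 0"
    proof
      assume h: "inner (w + t *\<^sub>R d) e = 0"
      then have h2: "inner w e + t * inner d e = 0" by (simp add: inner_add_left)
      show False
      proof (cases "inner d e = 0")
        case True
        then have "e \<in> D" using e d0 by auto
        then show False using True h2 w by simp
      next
        case False
        then have "t = - inner w e / inner d e" using h2 by (simp add: field_simps)
        then show False using t e by auto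
      qed
    qed
  qed
  then show ?case by blast
qed

lemma generic_functional:
  fixes X :: "'a::euclidean_space set" and u :: "'a \<Rightarrow> real"
  assumes "finite X" "linear u"
  shows "\<exists>\<psi>::'a\<Rightarrow>real. linear \<psi> \<and> inj_on \<psi> X \<and> (\<forall>a\<in>X. \<forall>b\<in>X. u a < u b \<longrightarrow> \<psi> a < \<psi> b)"
proof -
  let ?D = "{a - b | a b. a \<in> X \<and> b \<in> X \<and> a \<noteq> b}"
  have "finite ?D"
  proof -
    have "?D \<subseteq> (\<lambda>(a,b). a - b) ` (X \<times> X)" by auto
    then show ?thesis using assms(1) finite_subset by fastforce
  qed
  moreover have "0 \<notin> ?D" by auto
  ultimately obtain w where w: "\<forall>d\<in>?D. inner w d \<noteq> 0" using avoid_orth by blast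
  let ?P = "{(a,b). a \<in> X \<and> b \<in> X \<and> u a < u b}"
  define S where "S = (\<Sum>(a,b)\<in>?P. \<bar>inner w a - inner w b\<bar> / (u b - u a))"
  define \<epsilon> where "\<epsilon> = 1 / (1 + S)"
  have finP: "finite ?P" by (rule finite_subset[of _ "X \<times> X"]) (use assms in auto)
  have S0: "0 \<le> S" unfolding S_def
    by (rule sum_nonneg) auto
  have epos: "\<epsilon> > 0" unfolding \<epsilon>_def using S0 by simp
  define \<psi> where "\<psi> = (\<lambda>x. u x + \<epsilon> * inner w x)"
  have lin: "linear \<psi>" unfolding \<psi>_def
    using assms(2) by (intro linearI) (auto simp: linear_add linear_scale inner_add_right algebra_simps)
  have ord: "\<psi> a < \<psi> b" if "a \<in> X" "b \<in> X" "u a < u b" for a b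
  proof -
    have ab: "(a,b) \<in> ?P" using that by auto
    define t where "t = \<bar>inner w a - inner w b\<bar> / (u b - u a)"
    have "t \<le> S" unfolding S_def t_def
      using member_le_sum[OF ab _ finP, of "\<lambda>(a,b). \<bar>inner w a - inner w b\<bar> / (u b - u a)"] by auto
    then have "t / (1 + S) < 1" using S0 by (simp add: divide_less_eq)
    then have "\<epsilon> * t < 1" unfolding \<epsilon>_def by simp
    then have "\<epsilon> * (\<bar>inner w a - inner w b\<bar> / (u b - u a)) < 1" by (simp add: t_def)
    then have "\<epsilon> * \<bar>inner w a - inner w b\<bar> < u b - u a" using that(3) by (simp add: field_simps)
    moreover have "\<epsilon> * (inner w a - inner w b) \<le> \<epsilon> * \<bar>inner w a - inner w b\<bar>"
      using epos by (intro mult_left_mono) auto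
    ultimately show ?thesis unfolding \<psi>_def by (simp add: algebra_simps)
  qed
  have "inj_on \<psi> X"
  proof (rule inj_onI)
    fix a b assume ab: "a \<in> X" "b \<in> X" "\<psi> a = \<psi> b"
    show "a = b"
    proof (rule ccontr)
      assume ne: "a \<noteq> b"
      consider "u a < u b" | "u b < u a" | "u a = u b" by linarith
      then show False
      proof cases
        case 1 then show False using ord ab by fastforce
      next
        case 2 then show False using ord ab by fastforce
      next
        case 3
        then have "inner w a = inner w b" using ab epos unfolding \<psi>_def by simp
        then have "inner w (a - b) = 0" by (simp add: inner_diff_right)
        moreover have "a - b \<in> ?D" using ab ne by auto
        ultimately show False using w by blast
      qed
    qed
  qed
  moreover have "\<forall>a\<in>X. \<forall>b\<in>X. u a < u b \<longrightarrow> \<psi> a < \<psi> b" using ord by blast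
  ultimately show ?thesis using lin by blast
qed


definition argmx :: "'i set \<Rightarrow> ('i \<Rightarrow> 'a) \<Rightarrow> ('a \<Rightarrow> real) \<Rightarrow> 'i set" where
  "argmx I p \<phi> = {i\<in>I. \<forall>j\<in>I. \<phi> (p j) \<le> \<phi> (p i)}"

definition exs :: "'i set \<Rightarrow> ('i \<Rightarrow> 'a::euclidean_space) \<Rightarrow> 'i set set" where
  "exs I p = {T. \<exists>\<phi>::'a\<Rightarrow>real. linear \<phi> \<and> T = argmx I p \<phi>}"

definition sg :: "int \<Rightarrow> int" where "sg k = (if even k then 1 else -1)"

lemma sg_plus1: "sg (k + 1) = - sg k" by (simp add: sg_def)

lemma exs_sub: "T \<in> exs I p \<Longrightarrow> T \<subseteq> I"
  by (auto simp: exs_def argmx_def)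

lemma finite_exs: "finite I \<Longrightarrow> finite (exs I p)"
  by (rule finite_subset[of _ "Pow I"]) (auto dest: exs_sub)

lemma ex_max:
  fixes f :: "'i \<Rightarrow> real"
  assumes "finite T" "T \<noteq> {}"
  obtains t where "t \<in> T" "\<And>j. j \<in> T \<Longrightarrow> f j \<le> f t"
proof -
  have "Max (f ` T) \<in> f ` T" using assms by simp
  then obtain t where "t \<in> T" "f t = Max (f ` T)" by auto
  moreover have "\<And>j. j \<in> T \<Longrightarrow> f j \<le> Max (f ` T)" using assms by simp
  ultimately show ?thesis using that by metis
qed

lemma argmx_ne: "finite I \<Longrightarrow> I \<noteq> {} \<Longrightarrow> argmx I p \<phi> \<noteq> {}"
  unfolding argmx_def by (rule ex_max[of I "\<lambda>i. \<phi> (p i)"]) auto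

lemma exs_ne: "finite I \<Longrightarrow> I \<noteq> {} \<Longrightarrow> T \<in> exs I p \<Longrightarrow> T \<noteq> {}"
  by (auto simp: exs_def dest: argmx_ne)

lemma exs_closed: "T \<in> exs I p \<Longrightarrow> i \<in> T \<Longrightarrow> j \<in> I \<Longrightarrow> p j = p i \<Longrightarrow> j \<in> T"
  by (auto simp: exs_def argmx_def)

lemma exs_top:
  fixes p :: "'i \<Rightarrow> 'a::euclidean_space"
  shows "I \<in> exs I p"
proof -
  have "linear (\<lambda>y::'a. 0::real)" by (simp add: linear_zero)
  moreover have "I = argmx I p (\<lambda>y. 0)" by (auto simp: argmx_def)
  ultimately show ?thesis unfolding exs_def by blast
qed

lemma exs_face_of_face:
  fixes p :: "'i \<Rightarrow> 'a::euclidean_space"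
  assumes fin: "finite I" and T: "T \<in> exs I p" and lin: "linear \<psi>"
  shows "argmx T p \<psi> \<in> exs I p"
proof (cases "T = {}")
  case True
  then have "I = {}" using exs_ne[OF fin _ T] by auto
  then show ?thesis using exs_top[of I p] True by (simp add: argmx_def)
next
  case False
  obtain \<phi> where lphi: "linear \<phi>" and Tdef: "T = argmx I p \<phi>" using T unfolding exs_def by blast
  obtain t where t: "t \<in> T" using False by blast
  define M where "M = \<phi> (p t)"
  have TM: "i \<in> T \<longleftrightarrow> i \<in> I \<and> \<phi> (p i) = M" for i
    using t unfolding Tdef M_def argmx_def by (auto intro: order.antisym)
  have Mle: "i \<in> I \<Longrightarrow> \<phi> (p i) \<le> M" for i using t unfolding Tdef M_def argmx_def by auto
  have finT: "finite T" using exs_sub[OF T] fin finite_subset by blast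
  define G where "G = argmx T p \<psi>"
  have "G \<noteq> {}" unfolding G_def using argmx_ne[OF finT False] .
  then obtain g where g: "g \<in> G" by blast
  define m where "m = \<psi> (p g)"
  have Gm: "i \<in> G \<longleftrightarrow> i \<in> T \<and> \<psi> (p i) = m" for i
    using g unfolding G_def m_def argmx_def by (auto intro: order.antisym)
  have mle: "i \<in> T \<Longrightarrow> \<psi> (p i) \<le> m" for i using g unfolding G_def m_def argmx_def by auto
  define K where "K = (\<Sum>i\<in>I-T. (\<bar>\<psi> (p i)\<bar> + \<bar>m\<bar> + 1) / (M - \<phi> (p i)))"
  have Kge: "(\<bar>\<psi> (p i)\<bar> + \<bar>m\<bar> + 1) / (M - \<phi> (p i)) \<le> K" if "i \<in> I - T" for i
    unfolding K_def
  proof (rule member_le_sum[OF that _])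
    fix j assume "j \<in> I - T - {i}"
    then have "\<phi> (p j) < M" using Mle TM by (meson DiffD1 DiffD2 order_le_imp_less_or_eq)
    then show "0 \<le> (\<bar>\<psi> (p j)\<bar> + \<bar>m\<bar> + 1) / (M - \<phi> (p j))" by simp
  qed (use fin in simp)
  define \<phi>' where "\<phi>' = (\<lambda>y. \<psi> y + K * \<phi> y)"
  have lin': "linear \<phi>'" unfolding \<phi>'_def
    using lin lphi by (intro linearI) (auto simp: linear_add linear_scale algebra_simps)
  have val: "\<phi>' (p i) \<le> m + K * M \<and> (\<phi>' (p i) = m + K * M \<longleftrightarrow> i \<in> G)" if "i \<in> I" for i
  proof (cases "i \<in> T")
    case True
    then show ?thesis using TM mle Gm unfolding \<phi>'_def by fastforce
  next
    case False
    then have lt: "\<phi> (p i) < M" using Mle TM that by (meson order_le_imp_less_or_eq)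
    have "(\<bar>\<psi> (p i)\<bar> + \<bar>m\<bar> + 1) / (M - \<phi> (p i)) \<le> K" using Kge that False by simp
    then have "\<bar>\<psi> (p i)\<bar> + \<bar>m\<bar> + 1 \<le> K * (M - \<phi> (p i))" using lt by (simp add: divide_le_eq)
    then have "\<phi>' (p i) < m + K * M" unfolding \<phi>'_def by (simp add: algebra_simps)
    then show ?thesis using Gm False by simp
  qed
  have "G = argmx I p \<phi>'"
  proof
    show "G \<subseteq> argmx I p \<phi>'"
    proof
      fix i assume iG: "i \<in> G"
      then have iI: "i \<in> I" using Gm TM by auto
      then have eq: "\<phi>' (p i) = m + K * M" using val iG by blast
      have "\<forall>j\<in>I. \<phi>' (p j) \<le> \<phi>' (p i)"
      proof
        fix j assume "j \<in> I"
        then have "\<phi>' (p j) \<le> m + K * M" using val by blast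
        then show "\<phi>' (p j) \<le> \<phi>' (p i)" using eq by simp
      qed
      then show "i \<in> argmx I p \<phi>'" using iI unfolding argmx_def by auto
    qed
    show "argmx I p \<phi>' \<subseteq> G"
    proof
      fix i assume "i \<in> argmx I p \<phi>'"
      then have i: "i \<in> I" "\<phi>' (p g) \<le> \<phi>' (p i)" using g Gm TM unfolding argmx_def by auto
      have "\<phi>' (p g) = m + K * M" using val g Gm TM by auto
      then show "i \<in> G" using val[OF i(1)] i(2) by linarith
    qed
  qed
  then show ?thesis using lin' unfolding exs_def G_def by blast
qed



locale vfig =
  fixes I :: "'i set" and p :: "'i \<Rightarrow> 'a::euclidean_space" and x :: 'a and \<eta> :: "'a \<Rightarrow> real"
  assumes fin: "finite I" and lin: "linear \<eta>" and xin: "x \<in> p ` I"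
    and sep: "\<And>i. i \<in> I \<Longrightarrow> p i \<noteq> x \<Longrightarrow> \<eta> (p i) < \<eta> x"
begin

definition "J = {i\<in>I. p i = x}"
definition "I' = I - J"
definition "q i = (1 / (\<eta> x - \<eta> (p i))) *\<^sub>R (p i - x)"

lemma J_ne: "J \<noteq> {}" using xin by (auto simp: J_def)

lemma I'_iff: "i \<in> I' \<longleftrightarrow> i \<in> I \<and> p i \<noteq> x" by (auto simp: I'_def J_def)

lemma dpos: "i \<in> I' \<Longrightarrow> \<eta> x - \<eta> (p i) > 0"
  using sep by (auto simp: I'_iff)

lemma q_lin:
  fixes \<phi> :: "'a \<Rightarrow> real"
  assumes "linear \<phi>" "i \<in> I'"
  shows "\<phi> (q i) = (\<phi> (p i) - \<phi> x) / (\<eta> x - \<eta> (p i))"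
  unfolding q_def using assms(1) by (simp add: linear_scale linear_diff diff_divide_distrib)

lemma q_neg:
  fixes \<psi> :: "'a \<Rightarrow> real"
  assumes "linear \<psi>" "i \<in> I'"
  shows "\<psi> (q i) < 0 \<longleftrightarrow> \<psi> (p i) < \<psi> x"
  using q_lin[OF assms] dpos[OF assms(2)] by (simp add: divide_less_0_iff)

lemma eta_q:
  assumes i: "i \<in> I'" shows "\<eta> (q i) = -1"
proof -
  have "\<eta> (q i) = (\<eta> (p i) - \<eta> x) / (\<eta> x - \<eta> (p i))" using q_lin[OF lin i] .
  also have "\<dots> = -1" using dpos[OF i] by (simp add: field_simps)
  finally show ?thesis .
qed

lemma a1:
  assumes R: "R \<in> exs I' q" and Rne: "R \<noteq> {}"
  shows "R \<union> J \<in> exs I p"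
proof -
  obtain \<psi> where lpsi: "linear \<psi>" and Rdef: "R = argmx I' q \<psi>" using R unfolding exs_def by blast
  obtain r where r: "r \<in> R" using Rne by blast
  define m where "m = \<psi> (q r)"
  have RI': "R \<subseteq> I'" using exs_sub[OF R] .
  have mle: "i \<in> I' \<Longrightarrow> \<psi> (q i) \<le> m" for i using r unfolding Rdef m_def argmx_def by auto
  have Rm: "i \<in> R \<longleftrightarrow> i \<in> I' \<and> \<psi> (q i) = m" for i
    using r unfolding Rdef m_def argmx_def by (auto intro: order.antisym)
  define \<phi> where "\<phi> = (\<lambda>y. \<psi> y + m * \<eta> y)"
  have lphi: "linear \<phi>" unfolding \<phi>_def
    using lin lpsi by (intro linearI) (auto simp: linear_add linear_scale algebra_simps)
  have key: "\<phi> (p i) - \<phi> x = (\<eta> x - \<eta> (p i)) * (\<psi> (q i) - m)" if "i \<in> I'" for i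
  proof -
    have "\<psi> (q i) = (\<psi> (p i) - \<psi> x) / (\<eta> x - \<eta> (p i))" using q_lin[OF lpsi that] .
    then have "(\<eta> x - \<eta> (p i)) * \<psi> (q i) = \<psi> (p i) - \<psi> x" using dpos[OF that] by simp
    then show ?thesis unfolding \<phi>_def by (simp add: algebra_simps)
  qed
  have val: "\<phi> (p i) \<le> \<phi> x \<and> (\<phi> (p i) = \<phi> x \<longleftrightarrow> i \<in> R \<union> J)" if "i \<in> I" for i
  proof (cases "i \<in> J")
    case True then show ?thesis by (simp add: J_def)
  next
    case False
    then have i: "i \<in> I'" using that by (simp add: I'_def)
    have "(\<eta> x - \<eta> (p i)) * (\<psi> (q i) - m) \<le> 0"
      using dpos[OF i] mle[OF i] by (simp add: mult_nonneg_nonpos)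
    moreover have "(\<eta> x - \<eta> (p i)) * (\<psi> (q i) - m) = 0 \<longleftrightarrow> i \<in> R"
      using dpos[OF i] Rm i by auto
    ultimately show ?thesis using key[OF i] False by auto
  qed
  obtain j0 where j0: "j0 \<in> J" using J_ne by blast
  then have j0I: "j0 \<in> I" "p j0 = x" by (auto simp: J_def)
  have "R \<union> J = argmx I p \<phi>"
  proof
    show "R \<union> J \<subseteq> argmx I p \<phi>"
    proof
      fix i assume i: "i \<in> R \<union> J"
      then have iI: "i \<in> I" using RI' by (auto simp: I'_def J_def)
      then have eq: "\<phi> (p i) = \<phi> x" using val i by blast
      have "\<forall>j\<in>I. \<phi> (p j) \<le> \<phi> (p i)" using val eq by simp
      then show "i \<in> argmx I p \<phi>" using iI unfolding argmx_def by auto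
    qed
    show "argmx I p \<phi> \<subseteq> R \<union> J"
    proof
      fix i assume "i \<in> argmx I p \<phi>"
      then have i: "i \<in> I" "\<phi> (p j0) \<le> \<phi> (p i)" using j0I unfolding argmx_def by auto
      then have "\<phi> (p i) = \<phi> x" using val[OF i(1)] j0I by simp
      then show "i \<in> R \<union> J" using val[OF i(1)] by blast
    qed
  qed
  then show ?thesis using lphi unfolding exs_def by blast
qed

lemma a2:
  assumes T: "T \<in> exs I p" and JT: "J \<subseteq> T" and ne: "T - J \<noteq> {}"
  shows "T - J \<in> exs I' q"
proof -
  obtain \<phi> where lphi: "linear \<phi>" and Tdef: "T = argmx I p \<phi>" using T unfolding exs_def by blast
  obtain j0 where j0: "j0 \<in> J" using J_ne by blast
  then have j0I: "j0 \<in> T" "p j0 = x" using JT by (auto simp: J_def)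
  have le: "i \<in> I \<Longrightarrow> \<phi> (p i) \<le> \<phi> x" for i using j0I unfolding Tdef argmx_def by auto
  have Tx: "i \<in> T \<longleftrightarrow> i \<in> I \<and> \<phi> (p i) = \<phi> x" for i
    using j0I le unfolding Tdef argmx_def by (auto intro: order.antisym)
  have qv: "\<phi> (q i) \<le> 0 \<and> (\<phi> (q i) = 0 \<longleftrightarrow> i \<in> T)" if i: "i \<in> I'" for i
  proof -
    have iI: "i \<in> I" using i by (simp add: I'_def)
    have "\<phi> (q i) = (\<phi> (p i) - \<phi> x) / (\<eta> x - \<eta> (p i))" using q_lin[OF lphi i] .
    then show ?thesis using dpos[OF i] le[OF iI] Tx iI by (auto simp: divide_le_0_iff)
  qed
  obtain r where r: "r \<in> T - J" using ne by blast
  then have rI': "r \<in> I'" using exs_sub[OF T] by (auto simp: I'_def)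
  have "T - J = argmx I' q \<phi>"
  proof
    show "T - J \<subseteq> argmx I' q \<phi>"
    proof
      fix i assume i: "i \<in> T - J"
      then have iI': "i \<in> I'" using exs_sub[OF T] by (auto simp: I'_def)
      then have eq: "\<phi> (q i) = 0" using qv i by blast
      have "\<forall>j\<in>I'. \<phi> (q j) \<le> \<phi> (q i)"
      proof
        fix j assume "j \<in> I'" then show "\<phi> (q j) \<le> \<phi> (q i)" using qv eq by simp
      qed
      then show "i \<in> argmx I' q \<phi>" using iI' unfolding argmx_def by auto
    qed
    show "argmx I' q \<phi> \<subseteq> T - J"
    proof
      fix i assume "i \<in> argmx I' q \<phi>"
      then have i: "i \<in> I'" "\<phi> (q r) \<le> \<phi> (q i)" using rI' unfolding argmx_def by auto
      have "\<phi> (q r) = 0" using qv[OF rI'] r by blast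
      then have "\<phi> (q i) = 0" using qv[OF i(1)] i(2) by linarith
      then show "i \<in> T - J" using qv[OF i(1)] i(1) by (auto simp: I'_def)
    qed
  qed
  then show ?thesis using lphi unfolding exs_def by blast
qed

lemma p_from_q: "i \<in> I' \<Longrightarrow> p i - x = (\<eta> x - \<eta> (p i)) *\<^sub>R q i"
  using dpos[of i] by (simp add: q_def)

lemma aff_hyper: "affine {y. \<eta> y = -1}"
  unfolding affine_def using lin
  by (auto simp: linear_add linear_scale)

lemma b:
  assumes RI': "R \<subseteq> I'" and Rne: "R \<noteq> {}"
  shows "aff_dim (p ` (R \<union> J)) = aff_dim (q ` R) + 1"
proof -
  have pJ: "p ` J = {x}" using J_ne by (auto simp: J_def)
  have pRJ: "p ` (R \<union> J) = insert x (p ` R)" using pJ by auto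
  define D where "D = (\<lambda>y. y - x) ` (p ` R)"
  have "aff_dim (insert x (p ` R)) = int (dim ((\<lambda>y. y - x) ` insert x (p ` R)))"
    by (rule aff_dim_eq_dim_subtract) (simp add: hull_inc)
  also have "(\<lambda>y. y - x) ` insert x (p ` R) = insert 0 D" by (simp add: D_def)
  also have "dim (insert 0 D) = dim D" by (simp add: dim_insert span_zero)
  finally have A1: "aff_dim (p ` (R \<union> J)) = int (dim D)" using pRJ by simp
  define Y where "Y = q ` R"
  have "affine hull Y \<subseteq> {y. \<eta> y = -1}"
    by (rule hull_minimal) (use RI' eta_q aff_hyper in \<open>auto simp: Y_def\<close>)
  then have Y0: "0 \<notin> affine hull Y" using lin by (auto simp: linear_0)
  have "aff_dim (insert 0 Y) = aff_dim Y + 1" using Y0 by (simp add: aff_dim_insert)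
  moreover have "aff_dim (insert 0 Y) = int (dim (insert 0 Y))"
    by (rule aff_dim_zero) (simp add: hull_inc)
  moreover have "dim (insert 0 Y) = dim Y" by (simp add: dim_insert span_zero)
  moreover have "span Y = span D"
  proof (subst span_eq, intro conjI)
    show "Y \<subseteq> span D"
    proof
      fix y assume "y \<in> Y"
      then obtain i where i: "i \<in> R" "y = q i" by (auto simp: Y_def)
      have "p i - x \<in> D" using i by (auto simp: D_def)
      then have "(1 / (\<eta> x - \<eta> (p i))) *\<^sub>R (p i - x) \<in> span D" by (simp add: span_base span_mul)
      then show "y \<in> span D" using i by (simp add: q_def)
    qed
    show "D \<subseteq> span Y"
    proof
      fix d assume "d \<in> D"
      then obtain i where i: "i \<in> R" "d = p i - x" by (auto simp: D_def)
      have "q i \<in> Y" using i by (simp add: Y_def)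
      then have "(\<eta> x - \<eta> (p i)) *\<^sub>R q i \<in> span Y" by (simp add: span_base span_mul)
      then show "d \<in> span Y" using i p_from_q[of i] RI' by auto
    qed
  qed
  then have "dim Y = dim D" by (metis dim_span)
  ultimately show ?thesis using A1 by (simp add: Y_def)
qed

end


definition inner_prop :: "'i set \<Rightarrow> ('i \<Rightarrow> 'a::euclidean_space) \<Rightarrow> bool" where
  "inner_prop I p \<longleftrightarrow> (\<forall>(\<psi>::'a\<Rightarrow>real) x. linear \<psi> \<longrightarrow> inj_on \<psi> (p ` I) \<longrightarrow> x \<in> p ` I \<longrightarrow>
     (\<Sum>T\<in>{T\<in>exs I p. x \<in> p ` T \<and> (\<forall>i\<in>T. \<psi> (p i) \<le> \<psi> x)}. sg (aff_dim (p ` T)))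
       = (if \<forall>i\<in>I. \<psi> x \<le> \<psi> (p i) then 1 else 0))"

lemma top_unique:
  fixes \<psi> :: "'a::euclidean_space \<Rightarrow> real"
  assumes fin: "finite I" and T: "T \<in> exs I p" and Tne: "T \<noteq> {}" and inj: "inj_on \<psi> (p ` I)"
  shows "\<exists>!x. x \<in> p ` I \<and> x \<in> p ` T \<and> (\<forall>i\<in>T. \<psi> (p i) \<le> \<psi> x)"
proof -
  have TI: "T \<subseteq> I" using exs_sub[OF T] .
  have finT: "finite T" using fin TI finite_subset by blast
  obtain t where t: "t \<in> T" "\<And>j. j \<in> T \<Longrightarrow> \<psi> (p j) \<le> \<psi> (p t)"
    using ex_max[OF finT Tne, of "\<lambda>i. \<psi> (p i)"] by blast
  show ?thesis
  proof (rule ex1I[of _ "p t"])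
    show "p t \<in> p ` I \<and> p t \<in> p ` T \<and> (\<forall>i\<in>T. \<psi> (p i) \<le> \<psi> (p t))" using t TI by auto
  next
    fix y assume y: "y \<in> p ` I \<and> y \<in> p ` T \<and> (\<forall>i\<in>T. \<psi> (p i) \<le> \<psi> y)"
    then obtain s where s: "s \<in> T" "y = p s" by auto
    have "\<psi> y = \<psi> (p t)" using y t s by (meson order.antisym)
    then show "y = p t" using inj y t(1) TI by (auto dest: inj_onD)
  qed
qed

lemma sum_partition:
  assumes "finite A" "finite X" "\<And>T. T \<in> A \<Longrightarrow> \<exists>!x. x \<in> X \<and> R x T"
  shows "sum f A = (\<Sum>x\<in>X. sum f {T\<in>A. R x T})"
proof -
  define g where "g T = (THE x. x \<in> X \<and> R x T)" for T
  have g: "T \<in> A \<Longrightarrow> g T \<in> X \<and> R (g T) T" for T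
    unfolding g_def using assms(3) by (rule theI') 
  have eq: "x \<in> X \<Longrightarrow> {T\<in>A. R x T} = {T\<in>A. g T = x}" for x
    using g assms(3) by blast
  have "sum f A = (\<Sum>x\<in>X. sum f {T\<in>A. g T = x})"
    by (rule sum.group[symmetric]) (use assms g in auto)
  also have "\<dots> = (\<Sum>x\<in>X. sum f {T\<in>A. R x T})" using eq by simp
  finally show ?thesis .
qed

lemma K_from_inner:
  fixes p :: "'i \<Rightarrow> 'a::euclidean_space" and \<psi> :: "'a \<Rightarrow> real"
  assumes fin: "finite I" and inn: "inner_prop I p" and lin: "linear \<psi>"
    and i0: "i0 \<in> I" "\<psi> (p i0) < c"
  shows "(\<Sum>T\<in>{T\<in>exs I p. \<forall>i\<in>T. \<psi> (p i) < c}. sg (aff_dim (p ` T))) = 1"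
proof -
  define X where "X = p ` I"
  have finX: "finite X" using fin by (simp add: X_def)
  obtain \<psi>' :: "'a \<Rightarrow> real" where lin': "linear \<psi>'" and inj': "inj_on \<psi>' X"
    and ord: "\<forall>a\<in>X. \<forall>b\<in>X. \<psi> a < \<psi> b \<longrightarrow> \<psi>' a < \<psi>' b"
    using generic_functional[OF finX lin] by blast
  have mono: "a \<in> X \<Longrightarrow> b \<in> X \<Longrightarrow> \<psi>' a \<le> \<psi>' b \<Longrightarrow> \<psi> a \<le> \<psi> b" for a b
    using ord by (meson not_le)
  define A where "A = {T\<in>exs I p. \<forall>i\<in>T. \<psi> (p i) < c}"
  define R where "R x T \<longleftrightarrow> x \<in> p ` T \<and> (\<forall>i\<in>T. \<psi>' (p i) \<le> \<psi>' x)" for x T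
  have Ine: "I \<noteq> {}" using i0 by auto
  have finA: "finite A" unfolding A_def using finite_exs[OF fin, of p] by simp
  have uniq: "\<exists>!x. x \<in> X \<and> R x T" if "T \<in> A" for T
  proof -
    have T: "T \<in> exs I p" using that by (simp add: A_def)
    show ?thesis using top_unique[OF fin T exs_ne[OF fin Ine T], of \<psi>'] inj'
      unfolding X_def R_def by simp
  qed
  have "sum (\<lambda>T. sg (aff_dim (p ` T))) A = (\<Sum>x\<in>X. sum (\<lambda>T. sg (aff_dim (p ` T))) {T\<in>A. R x T})"
    by (rule sum_partition[OF finA finX uniq])
  also have "\<dots> = (\<Sum>x\<in>X. if \<psi> x < c then (if \<forall>i\<in>I. \<psi>' x \<le> \<psi>' (p i) then 1 else 0) else 0)"
  proof (rule sum.cong[OF refl])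
    fix x assume xX: "x \<in> X"
    have sub: "T \<in> exs I p \<Longrightarrow> R x T \<Longrightarrow> i \<in> T \<Longrightarrow> \<psi> (p i) \<le> \<psi> x" for T i
      using mono[of "p i" x] xX exs_sub[of T I p] unfolding R_def X_def by auto
    show "sum (\<lambda>T. sg (aff_dim (p ` T))) {T\<in>A. R x T} =
        (if \<psi> x < c then (if \<forall>i\<in>I. \<psi>' x \<le> \<psi>' (p i) then 1 else 0) else 0)"
    proof (cases "\<psi> x < c")
      case True
      have "{T\<in>A. R x T} = {T\<in>exs I p. R x T}"
        unfolding A_def using sub True by fastforce
      then show ?thesis using inn lin' inj' xX True unfolding inner_prop_def R_def X_def by simp
    next
      case False
      have e: "{T\<in>A. R x T} = {}"
        unfolding A_def R_def using False by auto
      show ?thesis unfolding e using False by simp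
    qed
  qed
  also have "\<dots> = 1"
  proof -
    obtain i1 where i1: "i1 \<in> I" "\<And>j. j \<in> I \<Longrightarrow> - \<psi>' (p j) \<le> - \<psi>' (p i1)"
      using ex_max[OF fin Ine, of "\<lambda>i. - \<psi>' (p i)"] by blast
    define x0 where "x0 = p i1"
    have x0X: "x0 \<in> X" using i1 by (simp add: x0_def X_def)
    have iff: "(\<forall>i\<in>I. \<psi>' x \<le> \<psi>' (p i)) \<longleftrightarrow> x = x0" if "x \<in> X" for x
    proof
      assume "\<forall>i\<in>I. \<psi>' x \<le> \<psi>' (p i)"
      then have "\<psi>' x \<le> \<psi>' x0" using i1 by (simp add: x0_def)
      moreover have "\<psi>' x0 \<le> \<psi>' x" using i1 that by (auto simp: x0_def X_def)
      ultimately show "x = x0" using inj' that x0X by (meson inj_onD order.antisym)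
    next
      assume "x = x0" then show "\<forall>i\<in>I. \<psi>' x \<le> \<psi>' (p i)" using i1 by (simp add: x0_def)
    qed
    have "\<psi>' x0 \<le> \<psi>' (p i0)" using i1 i0 by (simp add: x0_def)
    then have "\<psi> x0 \<le> \<psi> (p i0)" using mono x0X i0 by (simp add: X_def)
    then have x0c: "\<psi> x0 < c" using i0 by simp
    have "(\<Sum>x\<in>X. if \<psi> x < c then (if \<forall>i\<in>I. \<psi>' x \<le> \<psi>' (p i) then 1 else 0) else 0)
        = (\<Sum>x\<in>X. if x = x0 then 1 else (0::int))"
      by (rule sum.cong[OF refl]) (use iff x0c in auto)
    also have "\<dots> = 1" using x0X finX by simp
    finally show ?thesis .
  qed
  finally show ?thesis by (simp add: A_def)
qed



lemma inner_all:
  fixes p :: "'i \<Rightarrow> 'a::euclidean_space"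
  assumes "finite I"
  shows "inner_prop I p"
  using assms
proof (induction "card I" arbitrary: I p rule: less_induct)
  case (less I p)
  note fin = less.prems
  show ?case unfolding inner_prop_def
  proof (intro allI impI)
    fix \<psi> :: "'a \<Rightarrow> real" and x
    assume lin: "linear \<psi>" and inj: "inj_on \<psi> (p ` I)" and xin: "x \<in> p ` I"
    define J where "J = {i\<in>I. p i = x}"
    define C where "C = {T\<in>exs I p. x \<in> p ` T \<and> (\<forall>i\<in>T. \<psi> (p i) \<le> \<psi> x)}"
    have CJ: "argmx T p \<psi> = J" if T: "T \<in> C" for T
    proof -
      have Te: "T \<in> exs I p" and xT: "x \<in> p ` T" and le: "\<forall>i\<in>T. \<psi> (p i) \<le> \<psi> x"
        using T by (auto simp: C_def)
      have TI: "T \<subseteq> I" using exs_sub[OF Te] .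
      obtain t where t: "t \<in> T" "p t = x" using xT by auto
      show ?thesis
      proof
        show "argmx T p \<psi> \<subseteq> J"
        proof
          fix i assume "i \<in> argmx T p \<psi>"
          then have i: "i \<in> T" "\<psi> (p t) \<le> \<psi> (p i)" using t unfolding argmx_def by auto
          then have "\<psi> (p i) = \<psi> x" using le t by force
          then have "p i = x" using inj i TI xin by (auto dest: inj_onD)
          then show "i \<in> J" using i TI by (auto simp: J_def)
        qed
        show "J \<subseteq> argmx T p \<psi>"
        proof
          fix i assume "i \<in> J"
          then have i: "i \<in> I" "p i = x" by (auto simp: J_def)
          then have "i \<in> T" using exs_closed[OF Te t(1)] t by simp
          then show "i \<in> argmx T p \<psi>" using le i unfolding argmx_def by auto
        qed
      qed
    qed
    have main: "(\<Sum>T\<in>C. sg (aff_dim (p ` T))) = (if \<forall>i\<in>I. \<psi> x \<le> \<psi> (p i) then 1 else 0)"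
    proof (cases "J \<in> exs I p")
      case False
      have Ce: "C = {}"
      proof (rule ccontr)
        assume "C \<noteq> {}"
        then obtain T where "T \<in> C" by blast
        then have "argmx T p \<psi> \<in> exs I p" using exs_face_of_face[OF fin _ lin] by (auto simp: C_def)
        then show False using CJ[OF \<open>T \<in> C\<close>] False by simp
      qed
      have "\<not> (\<forall>i\<in>I. \<psi> x \<le> \<psi> (p i))"
      proof
        assume mn: "\<forall>i\<in>I. \<psi> x \<le> \<psi> (p i)"
        have "J = argmx I p (\<lambda>y. - \<psi> y)"
        proof
          show "J \<subseteq> argmx I p (\<lambda>y. - \<psi> y)" using mn by (auto simp: J_def argmx_def)
          show "argmx I p (\<lambda>y. - \<psi> y) \<subseteq> J"
          proof
            fix i assume "i \<in> argmx I p (\<lambda>y. - \<psi> y)"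
            then have i: "i \<in> I" "\<forall>j\<in>I. \<psi> (p i) \<le> \<psi> (p j)" by (auto simp: argmx_def)
            then have "\<psi> (p i) = \<psi> x" using mn xin by (auto intro: order.antisym)
            then have "p i = x" using inj i xin by (auto dest: inj_onD)
            then show "i \<in> J" using i by (simp add: J_def)
          qed
        qed
        moreover have "linear (\<lambda>y. - \<psi> y)" using lin by (simp add: linear_compose_neg)
        ultimately have "J \<in> exs I p" unfolding exs_def by blast
        then show False using False by simp
      qed
      then show ?thesis using Ce by simp
    next
      case True
      then obtain \<eta> :: "'a \<Rightarrow> real" where leta: "linear \<eta>" and Jd: "J = argmx I p \<eta>"
        unfolding exs_def by blast
      obtain j0 where j0: "j0 \<in> I" "p j0 = x" using xin by auto
      then have j0J: "j0 \<in> J" by (simp add: J_def)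
      have sep: "\<eta> (p i) < \<eta> x" if "i \<in> I" "p i \<noteq> x" for i
      proof -
        have "i \<notin> J" using that by (simp add: J_def)
        then have "\<not> (\<forall>j\<in>I. \<eta> (p j) \<le> \<eta> (p i))" using that(1) unfolding Jd argmx_def by blast
        then obtain j where j: "j \<in> I" "\<eta> (p i) < \<eta> (p j)" by (auto simp: not_le)
        have "\<eta> (p j) \<le> \<eta> x" using j0J j j0 unfolding Jd argmx_def by auto
        then show ?thesis using j by simp
      qed
      interpret V: vfig I p x \<eta>
        using fin leta xin sep by (simp add: vfig_def)
      have VJ: "V.J = J" by (simp add: V.J_def J_def)
      show ?thesis
      proof (cases "V.I' = {}")
        case True
        then have allx: "i \<in> I \<Longrightarrow> p i = x" for i by (auto simp: V.I'_iff)
        have "C = {I}"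
        proof
          show "C \<subseteq> {I}"
          proof
            fix T assume "T \<in> C"
            then have Te: "T \<in> exs I p" and xT: "x \<in> p ` T" by (auto simp: C_def)
            obtain t where t: "t \<in> T" "p t = x" using xT by auto
            have "I \<subseteq> T" using exs_closed[OF Te t(1)] allx t by auto
            then show "T \<in> {I}" using exs_sub[OF Te] by auto
          qed
          show "{I} \<subseteq> C" using exs_top[of I p] xin allx by (auto simp: C_def)
        qed
        moreover have "p ` I = {x}" using allx xin by auto
        moreover have "\<forall>i\<in>I. \<psi> x \<le> \<psi> (p i)" using allx by simp
        ultimately show ?thesis by (simp add: sg_def)
      next
        case False
        note I'ne = False
        have finI': "finite V.I'" using fin by (simp add: V.I'_def)
        have "card V.I' < card I"
          using fin V.J_ne unfolding V.I'_def V.J_def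
          by (intro psubset_card_mono) auto
        then have innI': "inner_prop V.I' V.q" using less.hyps finI' by blast
        define Rs where "Rs = {R\<in>exs V.I' V.q. \<forall>i\<in>R. \<psi> (V.q i) < 0}"
        have finRs: "finite Rs" unfolding Rs_def using finite_exs[OF finI', of V.q] by simp
        have RsI': "R \<in> Rs \<Longrightarrow> R \<subseteq> V.I'" for R unfolding Rs_def using exs_sub by blast
        have Rsne: "R \<in> Rs \<Longrightarrow> R \<noteq> {}" for R
          unfolding Rs_def using exs_ne[OF finI' I'ne] by blast
        have disj: "R \<subseteq> V.I' \<Longrightarrow> R \<inter> J = {}" for R by (auto simp: V.I'_def VJ)
        have Ceq: "C = insert J ((\<lambda>R. R \<union> J) ` Rs)"
        proof
          show "C \<subseteq> insert J ((\<lambda>R. R \<union> J) ` Rs)"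
          proof
            fix T assume TC: "T \<in> C"
            then have Te: "T \<in> exs I p" and xT: "x \<in> p ` T" and le: "\<forall>i\<in>T. \<psi> (p i) \<le> \<psi> x"
              by (auto simp: C_def)
            obtain t where t: "t \<in> T" "p t = x" using xT by auto
            have JT: "J \<subseteq> T" using exs_closed[OF Te t(1)] t by (auto simp: J_def)
            show "T \<in> insert J ((\<lambda>R. R \<union> J) ` Rs)"
            proof (cases "T - J = {}")
              case True then show ?thesis using JT by auto
            next
              case False
              have "T - J \<in> exs V.I' V.q" using V.a2[of T] Te JT VJ False by simp
              moreover have "\<forall>i\<in>T - J. \<psi> (V.q i) < 0"
              proof
                fix i assume i: "i \<in> T - J"
                then have iI': "i \<in> V.I'" using exs_sub[OF Te] by (auto simp: V.I'_def VJ)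
                then have "p i \<noteq> x" by (simp add: V.I'_iff)
                then have "\<psi> (p i) \<noteq> \<psi> x" using inj iI' xin by (auto simp: V.I'_iff dest: inj_onD)
                then have "\<psi> (p i) < \<psi> x" using le i by force
                then show "\<psi> (V.q i) < 0" using V.q_neg[OF lin iI'] by simp
              qed
              ultimately have "T - J \<in> Rs" by (simp add: Rs_def)
              moreover have "T = (T - J) \<union> J" using JT by auto
              ultimately show ?thesis by blast
            qed
          qed
          show "insert J ((\<lambda>R. R \<union> J) ` Rs) \<subseteq> C"
          proof
            fix T assume "T \<in> insert J ((\<lambda>R. R \<union> J) ` Rs)"
            then consider "T = J" | R where "R \<in> Rs" "T = R \<union> J" by blast
            then show "T \<in> C"
            proof cases
              case 1
              then show ?thesis using True j0J j0 by (auto simp: C_def J_def)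
            next
              case 2
              have Te: "T \<in> exs I p" using V.a1[of R] 2 Rsne[OF 2(1)] VJ unfolding Rs_def by auto
              have "\<forall>i\<in>T. \<psi> (p i) \<le> \<psi> x"
              proof
                fix i assume "i \<in> T"
                then consider "i \<in> J" | "i \<in> R" using 2 by blast
                then show "\<psi> (p i) \<le> \<psi> x"
                proof cases
                  case 1 then show ?thesis by (simp add: J_def)
                next
                  case 2
                  note iR = 2
                  then have iI': "i \<in> V.I'" using RsI'[OF \<open>R \<in> Rs\<close>] by blast
                  have "\<psi> (V.q i) < 0" using iR \<open>R \<in> Rs\<close> by (auto simp: Rs_def)
                  then show ?thesis using V.q_neg[OF lin iI'] by simp
                qed
              qed
              then show ?thesis using Te 2 j0J j0 by (force simp: C_def)
            qed
          qed
        qed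
        have Jnot: "J \<notin> (\<lambda>R. R \<union> J) ` Rs"
        proof
          assume "J \<in> (\<lambda>R. R \<union> J) ` Rs"
          then obtain R where "R \<in> Rs" "J = R \<union> J" by blast
          then show False using Rsne disj RsI' by blast
        qed
        have injU: "inj_on (\<lambda>R. R \<union> J) Rs"
        proof (rule inj_onI)
          fix R1 R2 assume "R1 \<in> Rs" "R2 \<in> Rs" "R1 \<union> J = R2 \<union> J"
          then show "R1 = R2" using disj RsI' by blast
        qed
        have "(\<Sum>T\<in>C. sg (aff_dim (p ` T))) = sg (aff_dim (p ` J)) + (\<Sum>R\<in>Rs. sg (aff_dim (p ` (R \<union> J))))"
          unfolding Ceq using finRs Jnot injU by (simp add: sum.reindex)
        also have "sg (aff_dim (p ` J)) = 1"
        proof -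
          have "p ` J = {x}" using V.J_ne VJ by (auto simp: J_def)
          then show ?thesis by (simp add: sg_def)
        qed
        also have "(\<Sum>R\<in>Rs. sg (aff_dim (p ` (R \<union> J)))) = - (\<Sum>R\<in>Rs. sg (aff_dim (V.q ` R)))"
        proof -
          have "(\<Sum>R\<in>Rs. sg (aff_dim (p ` (R \<union> J)))) = (\<Sum>R\<in>Rs. - sg (aff_dim (V.q ` R)))"
          proof (rule sum.cong[OF refl])
            fix R assume "R \<in> Rs"
            then have "aff_dim (p ` (R \<union> J)) = aff_dim (V.q ` R) + 1"
              using V.b[OF RsI' Rsne] VJ by simp
            then show "sg (aff_dim (p ` (R \<union> J))) = - sg (aff_dim (V.q ` R))" by (simp add: sg_plus1)
          qed
          then show ?thesis by (simp add: sum_negf)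
        qed
        finally have S: "(\<Sum>T\<in>C. sg (aff_dim (p ` T))) = 1 - (\<Sum>R\<in>Rs. sg (aff_dim (V.q ` R)))" by simp
        show ?thesis
        proof (cases "\<exists>i\<in>V.I'. \<psi> (V.q i) < 0")
          case True
          then obtain i where i: "i \<in> V.I'" "\<psi> (V.q i) < 0" by blast
          have "(\<Sum>R\<in>Rs. sg (aff_dim (V.q ` R))) = 1"
            unfolding Rs_def using K_from_inner[OF finI' innI' lin i] .
          moreover have "\<psi> (p i) < \<psi> x" using V.q_neg[OF lin i(1)] i(2) by simp
          moreover have "i \<in> I" using i by (simp add: V.I'_iff)
          ultimately show ?thesis using S by force
        next
          case False
          have "Rs = {}" using Rsne RsI' False unfolding Rs_def by blast
          moreover have "\<forall>i\<in>I. \<psi> x \<le> \<psi> (p i)"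
          proof
            fix i assume iI: "i \<in> I"
            show "\<psi> x \<le> \<psi> (p i)"
            proof (cases "p i = x")
              case True then show ?thesis by simp
            next
              case False
              then have "i \<in> V.I'" using iI by (simp add: V.I'_iff)
              then show ?thesis using V.q_neg[OF lin] \<open>\<not> (\<exists>i\<in>V.I'. \<psi> (V.q i) < 0)\<close> by force
            qed
          qed
          ultimately show ?thesis using S by simp
        qed
      qed
    qed
    then show "(\<Sum>T\<in>{T\<in>exs I p. x \<in> p ` T \<and> (\<forall>i\<in>T. \<psi> (p i) \<le> \<psi> x)}. sg (aff_dim (p ` T))) = (if \<forall>i\<in>I. \<psi> x \<le> \<psi> (p i) then 1 else 0)"
      by (simp add: C_def)
  qed
qed



lemma support_identity:
  fixes p :: "'i \<Rightarrow> 'a::euclidean_space" and u :: "'a \<Rightarrow> real"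
  assumes fin: "finite I" and Ine: "I \<noteq> {}" and lin: "linear u"
  shows "(\<Sum>T\<in>exs I p. real_of_int (sg (aff_dim (p ` T))) * Max ((\<lambda>i. u (p i)) ` T))
         = Min ((\<lambda>i. u (p i)) ` I)"
proof -
  define X where "X = p ` I"
  have finX: "finite X" using fin by (simp add: X_def)
  obtain \<psi>' :: "'a \<Rightarrow> real" where lin': "linear \<psi>'" and inj': "inj_on \<psi>' X"
    and ord: "\<forall>a\<in>X. \<forall>b\<in>X. u a < u b \<longrightarrow> \<psi>' a < \<psi>' b"
    using generic_functional[OF finX lin] by blast
  have mono: "a \<in> X \<Longrightarrow> b \<in> X \<Longrightarrow> \<psi>' a \<le> \<psi>' b \<Longrightarrow> u a \<le> u b" for a b
    using ord by (meson not_le)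
  define R where "R x T \<longleftrightarrow> x \<in> p ` T \<and> (\<forall>i\<in>T. \<psi>' (p i) \<le> \<psi>' x)" for x T
  have inn: "inner_prop I p" using inner_all[OF fin] .
  define f where "f T = real_of_int (sg (aff_dim (p ` T))) * Max ((\<lambda>i. u (p i)) ` T)" for T
  have uniq: "\<exists>!x. x \<in> X \<and> R x T" if "T \<in> exs I p" for T
    using top_unique[OF fin that exs_ne[OF fin Ine that], of \<psi>'] inj'
    unfolding X_def R_def by simp
  have "sum f (exs I p) = (\<Sum>x\<in>X. sum f {T\<in>exs I p. R x T})"
    by (rule sum_partition[OF finite_exs[OF fin] finX uniq])
  also have "\<dots> = (\<Sum>x\<in>X. u x * real_of_int (if \<forall>i\<in>I. \<psi>' x \<le> \<psi>' (p i) then 1 else 0))"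
  proof (rule sum.cong[OF refl])
    fix x assume xX: "x \<in> X"
    have "sum f {T\<in>exs I p. R x T} = (\<Sum>T\<in>{T\<in>exs I p. R x T}. u x * real_of_int (sg (aff_dim (p ` T))))"
    proof (rule sum.cong[OF refl])
      fix T assume T: "T \<in> {T\<in>exs I p. R x T}"
      then have Te: "T \<in> exs I p" and xT: "x \<in> p ` T" and le: "\<forall>i\<in>T. \<psi>' (p i) \<le> \<psi>' x"
        by (auto simp: R_def)
      have TI: "T \<subseteq> I" using exs_sub[OF Te] .
      have finT: "finite T" using fin TI finite_subset by blast
      have "Max ((\<lambda>i. u (p i)) ` T) = u x"
      proof (rule Max_eqI)
        show "finite ((\<lambda>i. u (p i)) ` T)" using finT by simp
        show "u x \<in> (\<lambda>i. u (p i)) ` T" using xT by auto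
        fix y assume "y \<in> (\<lambda>i. u (p i)) ` T"
        then obtain i where i: "i \<in> T" "y = u (p i)" by auto
        then show "y \<le> u x" using mono[of "p i" x] le xX TI by (auto simp: X_def)
      qed
      then show "f T = u x * real_of_int (sg (aff_dim (p ` T)))" by (simp add: f_def)
    qed
    also have "\<dots> = u x * real_of_int (\<Sum>T\<in>{T\<in>exs I p. R x T}. sg (aff_dim (p ` T)))"
      by (simp add: sum_distrib_left)
    also have "(\<Sum>T\<in>{T\<in>exs I p. R x T}. sg (aff_dim (p ` T))) = (if \<forall>i\<in>I. \<psi>' x \<le> \<psi>' (p i) then 1 else 0)"
      using inn lin' inj' xX unfolding inner_prop_def R_def X_def by simp
    finally show "sum f {T\<in>exs I p. R x T} = u x * real_of_int (if \<forall>i\<in>I. \<psi>' x \<le> \<psi>' (p i) then 1 else 0)" .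
  qed
  also have "\<dots> = Min ((\<lambda>i. u (p i)) ` I)"
  proof -
    obtain i1 where i1: "i1 \<in> I" "\<And>j. j \<in> I \<Longrightarrow> - \<psi>' (p j) \<le> - \<psi>' (p i1)"
      using ex_max[OF fin Ine, of "\<lambda>i. - \<psi>' (p i)"] by blast
    define x0 where "x0 = p i1"
    have x0X: "x0 \<in> X" using i1 by (simp add: x0_def X_def)
    have iff: "(\<forall>i\<in>I. \<psi>' x \<le> \<psi>' (p i)) \<longleftrightarrow> x = x0" if "x \<in> X" for x
    proof
      assume "\<forall>i\<in>I. \<psi>' x \<le> \<psi>' (p i)"
      then have "\<psi>' x \<le> \<psi>' x0" using i1 by (simp add: x0_def)
      moreover have "\<psi>' x0 \<le> \<psi>' x" using i1 that by (auto simp: x0_def X_def)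
      ultimately show "x = x0" using inj' that x0X by (meson inj_onD order.antisym)
    next
      assume "x = x0" then show "\<forall>i\<in>I. \<psi>' x \<le> \<psi>' (p i)" using i1 by (simp add: x0_def)
    qed
    have "(\<Sum>x\<in>X. u x * real_of_int (if \<forall>i\<in>I. \<psi>' x \<le> \<psi>' (p i) then 1 else 0))
        = (\<Sum>x\<in>X. if x = x0 then u x else 0)"
      by (rule sum.cong[OF refl]) (use iff in auto)
    also have "\<dots> = u x0" using x0X finX by simp
    also have "u x0 = Min ((\<lambda>i. u (p i)) ` I)"
    proof (rule Min_eqI[symmetric])
      show "finite ((\<lambda>i. u (p i)) ` I)" using fin by simp
      show "u x0 \<in> (\<lambda>i. u (p i)) ` I" using i1 by (auto simp: x0_def)
      fix y assume "y \<in> (\<lambda>i. u (p i)) ` I"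
      then obtain i where i: "i \<in> I" "y = u (p i)" by auto
      have "\<psi>' x0 \<le> \<psi>' (p i)" using i1 i by (simp add: x0_def)
      then show "u x0 \<le> y" using mono[of x0 "p i"] x0X i by (auto simp: X_def)
    qed
    finally show ?thesis .
  qed
  finally show ?thesis by (simp add: f_def)
qed



lemma convex_le_lin:
  fixes \<phi> :: "'a::real_vector \<Rightarrow> real"
  assumes lin: "linear \<phi>" shows "convex {z. \<phi> z \<le> M}"
proof (rule convexI)
  fix x y :: 'a and u v :: real
  assume "x \<in> {z. \<phi> z \<le> M}" "y \<in> {z. \<phi> z \<le> M}" "0 \<le> u" "0 \<le> v" "u + v = 1"
  then have h: "\<phi> x \<le> M" "\<phi> y \<le> M" "0 \<le> u" "0 \<le> v" "u + v = 1" by auto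
  have e: "\<phi> (u *\<^sub>R x + v *\<^sub>R y) = u * \<phi> x + v * \<phi> y" using lin by (simp add: linear_add linear_scale)
  have "u * \<phi> x + v * \<phi> y \<le> u * M + v * M" using h by (intro add_mono mult_left_mono) auto
  also have "\<dots> = M" using h(5) by (simp add: distrib_right[symmetric])
  finally show "u *\<^sub>R x + v *\<^sub>R y \<in> {z. \<phi> z \<le> M}" using e by simp
qed

lemma convex_eq_lin:
  fixes \<phi> :: "'a::real_vector \<Rightarrow> real"
  assumes lin: "linear \<phi>" shows "convex {z. \<phi> z = M}"
proof (rule convexI)
  fix x y :: 'a and u v :: real
  assume "x \<in> {z. \<phi> z = M}" "y \<in> {z. \<phi> z = M}" "0 \<le> u" "0 \<le> v" "u + v = 1"
  then have h: "\<phi> x = M" "\<phi> y = M" "u + v = 1" by auto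
  have e: "\<phi> (u *\<^sub>R x + v *\<^sub>R y) = u * \<phi> x + v * \<phi> y" using lin by (simp add: linear_add linear_scale)
  also have "\<dots> = (u + v) * M" using h(1,2) by (simp add: distrib_right)
  also have "\<dots> = M" using h by simp
  finally show "u *\<^sub>R x + v *\<^sub>R y \<in> {z. \<phi> z = M}" by simp
qed

lemma face_eq:
  fixes S :: "'a::euclidean_space set" and \<phi> :: "'a \<Rightarrow> real"
  assumes fin: "finite S" and ne: "S \<noteq> {}" and lin: "linear \<phi>"
  shows "{y \<in> convex hull S. \<forall>z\<in>convex hull S. \<phi> z \<le> \<phi> y} = convex hull (argmx S id \<phi>)"
    and "S \<inter> convex hull (argmx S id \<phi>) = argmx S id \<phi>"
proof -
  define M where "M = Max (\<phi> ` S)"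
  have Mle: "s \<in> S \<Longrightarrow> \<phi> s \<le> M" for s using fin by (simp add: M_def)
  have MS: "M \<in> \<phi> ` S" using fin ne by (simp add: M_def)
  define T where "T = argmx S id \<phi>"
  have T: "T = {s\<in>S. \<phi> s = M}"
    unfolding T_def argmx_def using Mle MS by (auto intro: order.antisym)
  have hullle: "convex hull S \<subseteq> {z. \<phi> z \<le> M}"
    by (rule hull_minimal) (use Mle convex_le_lin[OF lin] in auto)
  have hullT: "convex hull T \<subseteq> {z. \<phi> z = M}"
    by (rule hull_minimal) (use T convex_eq_lin[OF lin] in auto)
  have TS: "T \<subseteq> S" by (auto simp: T)
  show "S \<inter> convex hull (argmx S id \<phi>) = argmx S id \<phi>"
    unfolding T_def[symmetric]
  proof
    show "S \<inter> convex hull T \<subseteq> T" using hullT T by blast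
    show "T \<subseteq> S \<inter> convex hull T" using TS hull_subset[of T convex] by blast
  qed
  show "{y \<in> convex hull S. \<forall>z\<in>convex hull S. \<phi> z \<le> \<phi> y} = convex hull (argmx S id \<phi>)"
    unfolding T_def[symmetric]
  proof
    show "convex hull T \<subseteq> {y \<in> convex hull S. \<forall>z\<in>convex hull S. \<phi> z \<le> \<phi> y}"
    proof
      fix y assume y: "y \<in> convex hull T"
      then have "y \<in> convex hull S" using hull_mono[OF TS] by blast
      moreover have "\<phi> y = M" using y hullT by blast
      ultimately show "y \<in> {y \<in> convex hull S. \<forall>z\<in>convex hull S. \<phi> z \<le> \<phi> y}" using hullle by auto
    qed
    show "{y \<in> convex hull S. \<forall>z\<in>convex hull S. \<phi> z \<le> \<phi> y} \<subseteq> convex hull T"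
    proof
      fix y assume y: "y \<in> {y \<in> convex hull S. \<forall>z\<in>convex hull S. \<phi> z \<le> \<phi> y}"
      then have yS: "y \<in> convex hull S" and ymax: "\<forall>z\<in>convex hull S. \<phi> z \<le> \<phi> y" by auto
      obtain s0 where s0: "s0 \<in> S" "\<phi> s0 = M" using MS by auto
      have "\<phi> s0 \<le> \<phi> y" using ymax s0 hull_subset[of S convex] by auto
      moreover have "\<phi> y \<le> M" using yS hullle by auto
      ultimately have yM: "\<phi> y = M" using s0 by simp
      obtain a where a: "\<forall>x\<in>S. 0 \<le> a x" "sum a S = 1" "(\<Sum>x\<in>S. a x *\<^sub>R x) = y"
        using yS unfolding convex_hull_finite[OF fin] by blast
      have "\<phi> y = \<phi> (\<Sum>x\<in>S. a x *\<^sub>R x)" using a(3) by simp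
      also have "\<dots> = (\<Sum>x\<in>S. \<phi> (a x *\<^sub>R x))" by (rule linear_sum[OF lin])
      also have "\<dots> = (\<Sum>x\<in>S. a x * \<phi> x)" by (simp add: linear_scale[OF lin])
      finally have e1: "\<phi> y = (\<Sum>x\<in>S. a x * \<phi> x)" .
      have e2: "(\<Sum>x\<in>S. a x * (M - \<phi> x)) = (\<Sum>x\<in>S. a x * M) - (\<Sum>x\<in>S. a x * \<phi> x)"
        by (simp only: right_diff_distrib sum_subtractf)
      have "(\<Sum>x\<in>S. a x) * M = (\<Sum>x\<in>S. a x * M)" by (rule sum_distrib_right)
      then have e3: "(\<Sum>x\<in>S. a x * M) = M" using a(2) by simp
      have z0: "(\<Sum>x\<in>S. a x * (M - \<phi> x)) = 0" using e1 e2 e3 yM by linarith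
      have nn: "\<forall>x\<in>S. 0 \<le> a x * (M - \<phi> x)" using a(1) Mle by simp
      have z: "\<forall>x\<in>S. a x * (M - \<phi> x) = 0"
        using sum_nonneg_eq_0_iff[OF fin, of "\<lambda>x. a x * (M - \<phi> x)"] nn z0 by simp
      have a0: "x \<in> S - T \<Longrightarrow> a x = 0" for x
      proof -
        assume x: "x \<in> S - T"
        then have "\<phi> x \<noteq> M" by (auto simp: T)
        then show "a x = 0" using z x by auto
      qed
      have finT: "finite T" using fin TS finite_subset by blast
      have "sum a S = sum a T"
        by (rule sum.mono_neutral_right[OF fin TS]) (use a0 in auto)
      moreover have "(\<Sum>x\<in>S. a x *\<^sub>R x) = (\<Sum>x\<in>T. a x *\<^sub>R x)"
        by (rule sum.mono_neutral_right[OF fin TS]) (use a0 in auto)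
      ultimately show "y \<in> convex hull T"
      proof -
        have "(\<forall>x\<in>T. 0 \<le> a x) \<and> sum a T = 1 \<and> (\<Sum>x\<in>T. a x *\<^sub>R x) = y"
          using a TS \<open>sum a S = sum a T\<close> \<open>(\<Sum>x\<in>S. a x *\<^sub>R x) = (\<Sum>x\<in>T. a x *\<^sub>R x)\<close> by auto
        then have "\<exists>u. (\<forall>x\<in>T. 0 \<le> u x) \<and> sum u T = 1 \<and> (\<Sum>x\<in>T. u x *\<^sub>R x) = y" by blast
        then show ?thesis unfolding convex_hull_finite[OF finT] by simp
      qed
    qed
  qed
qed

lemma faces_exs:
  fixes S :: "'a::euclidean_space set"
  assumes fin: "finite S" and ne: "S \<noteq> {}"
  shows "faces (convex hull S) = (\<lambda>T. convex hull T) ` exs S id"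
    and "inj_on (\<lambda>T. convex hull T) (exs S id)"
proof -
  show "faces (convex hull S) = (\<lambda>T. convex hull T) ` exs S id"
  proof
    show "faces (convex hull S) \<subseteq> (\<lambda>T. convex hull T) ` exs S id"
    proof
      fix F assume "F \<in> faces (convex hull S)"
      then have "\<exists>\<phi>::'a \<Rightarrow> real. linear \<phi> \<and> F = {p \<in> convex hull S. \<forall>q\<in>convex hull S. \<phi> q \<le> \<phi> p}"
        by (simp add: faces_def)
      then obtain \<phi> :: "'a \<Rightarrow> real" where l: "linear \<phi>"
        and F: "F = {p \<in> convex hull S. \<forall>q\<in>convex hull S. \<phi> q \<le> \<phi> p}"
        by blast
      have "F = convex hull (argmx S id \<phi>)" using F face_eq(1)[OF fin ne l] by simp
      moreover have "argmx S id \<phi> \<in> exs S id" using l unfolding exs_def by (simp only: mem_Collect_eq) blast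
      ultimately show "F \<in> (\<lambda>T. convex hull T) ` exs S id" by (rule image_eqI)
    qed
    show "(\<lambda>T. convex hull T) ` exs S id \<subseteq> faces (convex hull S)"
    proof
      fix F assume "F \<in> (\<lambda>T. convex hull T) ` exs S id"
      then obtain T where T: "T \<in> exs S id" and FT: "F = convex hull T" by (rule imageE)
      have "\<exists>\<phi>::'a \<Rightarrow> real. linear \<phi> \<and> T = argmx S id \<phi>" using T by (simp add: exs_def)
      then obtain \<phi> :: "'a \<Rightarrow> real" where l: "linear \<phi>" and Tphi: "T = argmx S id \<phi>" by blast
      have F: "F = convex hull (argmx S id \<phi>)" using FT Tphi by simp
      have "F = {p \<in> convex hull S. \<forall>q\<in>convex hull S. \<phi> q \<le> \<phi> p}" using F face_eq(1)[OF fin ne l] by simp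
      then show "F \<in> faces (convex hull S)" using l unfolding faces_def by (simp only: mem_Collect_eq) blast
    qed
  qed
  show "inj_on (\<lambda>T. convex hull T) (exs S id)"
  proof (rule inj_onI)
    fix T1 T2 assume "T1 \<in> exs S id" "T2 \<in> exs S id" "convex hull T1 = convex hull T2"
    then have h1: "\<exists>\<phi>::'a \<Rightarrow> real. linear \<phi> \<and> T1 = argmx S id \<phi>"
      and h2: "\<exists>\<phi>::'a \<Rightarrow> real. linear \<phi> \<and> T2 = argmx S id \<phi>" by (simp_all add: exs_def)
    obtain \<phi>1 :: "'a \<Rightarrow> real" where "linear \<phi>1" "T1 = argmx S id \<phi>1" using h1 by blast
    obtain \<phi>2 :: "'a \<Rightarrow> real" where "linear \<phi>2" "T2 = argmx S id \<phi>2" using h2 by blast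
    have e1: "S \<inter> convex hull T1 = T1"
      using face_eq(2)[OF fin ne \<open>linear \<phi>1\<close>] \<open>T1 = argmx S id \<phi>1\<close> by simp
    have e2: "S \<inter> convex hull T2 = T2"
      using face_eq(2)[OF fin ne \<open>linear \<phi>2\<close>] \<open>T2 = argmx S id \<phi>2\<close> by simp
    show "T1 = T2" using e1 e2 \<open>convex hull T1 = convex hull T2\<close> by metis
  qed
qed



lemma pclass_add:
  assumes "ptope X" "ptope Y"
  shows "pclass (X + Y) = pclass X + pclass Y"
  using assms
  by transfer (auto simp: grel_def ptope_plus ptope_zero intro!: exI[of _ "{0}"])

lemma pclass_zero: "pclass ({0}::'a::euclidean_space set) = 0"
  by transfer (auto simp: grel_def ptope_zero intro!: exI[of _ "{0}"])

lemma ptope_hull: "finite T \<Longrightarrow> T \<noteq> {} \<Longrightarrow> ptope (convex hull T)"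
  unfolding ptope_def by blast

lemma pclass_sum:
  fixes f :: "'b \<Rightarrow> 'a::euclidean_space set"
  assumes "finite E" "\<And>T. T \<in> E \<Longrightarrow> ptope (f T)"
  shows "ptope (sum f E) \<and> pclass (sum f E) = (\<Sum>T\<in>E. pclass (f T))"
  using assms
proof (induction E rule: finite_induct)
  case empty then show ?case by (simp add: ptope_zero pclass_zero)
next
  case (insert T E)
  then have h: "ptope (sum f E)" "pclass (sum f E) = (\<Sum>T\<in>E. pclass (f T))" "ptope (f T)" by auto
  then show ?case using insert by (simp add: ptope_plus pclass_add)
qed

definition hm :: "'a::euclidean_space set \<Rightarrow> 'a \<Rightarrow> real" where
  "hm G w = Max ((\<lambda>x. inner w x) ` G)"

lemma hm_plus:
  assumes "finite G1" "G1 \<noteq> {}" "finite G2" "G2 \<noteq> {}"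
  shows "hm (G1 + G2) w = hm G1 w + hm G2 w"
proof -
  obtain a where a: "a \<in> G1" "\<And>x. x \<in> G1 \<Longrightarrow> inner w x \<le> inner w a"
    using ex_max[OF assms(1,2), of "inner w"] by blast
  obtain b where b: "b \<in> G2" "\<And>x. x \<in> G2 \<Longrightarrow> inner w x \<le> inner w b"
    using ex_max[OF assms(3,4), of "inner w"] by blast
  have h1: "hm G1 w = inner w a" unfolding hm_def
    by (rule Max_eqI) (use assms a in auto)
  have h2: "hm G2 w = inner w b" unfolding hm_def
    by (rule Max_eqI) (use assms b in auto)
  have "hm (G1 + G2) w = inner w (a + b)" unfolding hm_def
  proof (rule Max_eqI)
    show "finite ((\<lambda>x. inner w x) ` (G1 + G2))" using assms by (simp add: finite_set_plus)
    show "inner w (a + b) \<in> (\<lambda>x. inner w x) ` (G1 + G2)" using a b by (auto simp: set_plus_def)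
    fix y assume "y \<in> (\<lambda>x. inner w x) ` (G1 + G2)"
    then obtain x1 x2 where "x1 \<in> G1" "x2 \<in> G2" "y = inner w (x1 + x2)" by (auto simp: set_plus_def)
    then show "y \<le> inner w (a + b)" using a b by (simp add: inner_add_right add_mono)
  qed
  then show ?thesis using h1 h2 by (simp add: inner_add_right)
qed

lemma hm_sum:
  fixes f :: "'b \<Rightarrow> 'a::euclidean_space set"
  assumes "finite E" "\<And>T. T \<in> E \<Longrightarrow> finite (f T) \<and> f T \<noteq> {}"
  shows "finite (sum f E) \<and> sum f E \<noteq> {} \<and> hm (sum f E) w = (\<Sum>T\<in>E. hm (f T) w)"
  using assms
proof (induction E rule: finite_induct)
  case empty then show ?case by (simp add: hm_def)
next
  case (insert T E)
  then have h: "finite (sum f E)" "sum f E \<noteq> {}" "hm (sum f E) w = (\<Sum>T\<in>E. hm (f T) w)"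
    "finite (f T)" "f T \<noteq> {}" by auto
  have "finite (f T + sum f E)" using h by (simp add: finite_set_plus)
  moreover have "f T + sum f E \<noteq> {}" using h by (auto simp: set_plus_def)
  moreover have "hm (f T + sum f E) w = hm (f T) w + hm (sum f E) w" using hm_plus h by blast
  ultimately show ?case using insert h by simp
qed

lemma hull_sum:
  fixes f :: "'b \<Rightarrow> 'a::euclidean_space set"
  assumes "finite E"
  shows "convex hull (sum f E) = (\<Sum>T\<in>E. convex hull (f T))"
  using assms
proof (induction E rule: finite_induct)
  case empty then show ?case by simp
next
  case (insert T E)
  then show ?case by (simp add: convex_hull_set_plus)
qed

lemma hm_le_hull_sub:
  fixes G1 G2 :: "'a::euclidean_space set"
  assumes "finite G1" "G1 \<noteq> {}" "finite G2" "G2 \<noteq> {}" "\<And>w. hm G1 w \<le> hm G2 w"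
  shows "convex hull G1 \<subseteq> convex hull G2"
proof
  fix y assume y: "y \<in> convex hull G1"
  show "y \<in> convex hull G2"
  proof (rule ccontr)
    assume "y \<notin> convex hull G2"
    moreover have "convex (convex hull G2)" by simp
    moreover have "closed (convex hull G2)" using assms(3) by (simp add: compact_imp_closed finite_imp_compact_convex_hull)
    ultimately obtain a b where ab: "inner a y < b" "\<forall>x\<in>convex hull G2. inner a x > b"
      using separating_hyperplane_closed_point by blast
    define w where "w = - a"
    have "\<forall>x\<in>G2. inner w x < - b" using ab(2) hull_subset[of G2 convex] by (auto simp: w_def)
    then have "hm G2 w < - b" unfolding hm_def using assms(3,4) by simp
    moreover have "convex hull G1 \<subseteq> {z. inner w z \<le> hm G1 w}"
    proof (rule hull_minimal)
      show "G1 \<subseteq> {z. inner w z \<le> hm G1 w}" unfolding hm_def using assms(1) by auto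
      show "convex {z. inner w z \<le> hm G1 w}" by (rule convex_halfspace_le)
    qed
    then have "inner w y \<le> hm G1 w" using y by blast
    moreover have "inner w y > - b" using ab(1) by (simp add: w_def)
    ultimately show False using assms(5)[of w] by linarith
  qed
qed

lemma hm_neg:
  assumes "finite S" "S \<noteq> {}"
  shows "hm (uminus ` S) w = - Min ((\<lambda>x. inner w x) ` S)"
proof -
  obtain s where s: "s \<in> S" "\<And>x. x \<in> S \<Longrightarrow> - inner w x \<le> - inner w s"
    using ex_max[OF assms, of "\<lambda>x. - inner w x"] by blast
  have "hm (uminus ` S) w = - inner w s" unfolding hm_def
  proof (rule Max_eqI)
    show "finite ((\<lambda>x. inner w x) ` uminus ` S)" using assms by simp
    show "- inner w s \<in> (\<lambda>x. inner w x) ` uminus ` S"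
      using s(1) by (intro image_eqI[of _ _ "- s"] imageI) auto
    fix y assume "y \<in> (\<lambda>x. inner w x) ` uminus ` S"
    then obtain x where "x \<in> S" "y = - inner w x" by auto
    then show "y \<le> - inner w s" using s(2) by simp
  qed
  moreover have "Min ((\<lambda>x. inner w x) ` S) = inner w s"
    by (rule Min_eqI) (use assms s in \<open>auto simp: le_minus_iff\<close>)
  ultimately show ?thesis by simp
qed



theorem euler_general:
  fixes S :: "'a::euclidean_space set"
  assumes fin: "finite S" and ne: "S \<noteq> {}"
  shows "(\<Sum>F\<in>faces (convex hull S). if even (aff_dim F) then pclass F else - pclass F)
           = - pclass (uminus ` (convex hull S))"
proof -
  define E where "E = exs S id"
  have finE: "finite E" unfolding E_def using finite_exs[OF fin] .
  have TE: "T \<in> E \<Longrightarrow> finite T \<and> T \<noteq> {}" for T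
    unfolding E_def using exs_sub exs_ne[OF fin ne] fin finite_subset by metis
  define g where "g F = (if even (aff_dim F) then pclass F else - pclass F)" for F :: "'a set"
  define Ep where "Ep = {T\<in>E. even (aff_dim T)}"
  define Em where "Em = {T\<in>E. \<not> even (aff_dim T)}"
  have finEp: "finite Ep" "finite Em" using finE by (auto simp: Ep_def Em_def)
  have EpE: "Ep \<subseteq> E" "Em \<subseteq> E" by (auto simp: Ep_def Em_def)
  have "(\<Sum>F\<in>faces (convex hull S). g F) = (\<Sum>T\<in>E. g (convex hull T))"
    unfolding faces_exs(1)[OF fin ne] E_def using faces_exs(2)[OF fin ne] by (simp add: sum.reindex)
  also have "\<dots> = (\<Sum>T\<in>E. if even (aff_dim T) then pclass (convex hull T) else - pclass (convex hull T))"
    by (simp add: g_def aff_dim_convex_hull)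
  also have "\<dots> = (\<Sum>T\<in>Ep. pclass (convex hull T)) - (\<Sum>T\<in>Em. pclass (convex hull T))"
  proof -
    have "E \<inter> {T. even (aff_dim T)} = Ep" "E \<inter> - {T. even (aff_dim T)} = Em"
      by (auto simp: Ep_def Em_def)
    then show ?thesis by (simp add: sum.If_cases[OF finE] sum_negf)
  qed
  finally have L: "(\<Sum>F\<in>faces (convex hull S). g F) =
      (\<Sum>T\<in>Ep. pclass (convex hull T)) - (\<Sum>T\<in>Em. pclass (convex hull T))" .
  define GA where "GA = (\<Sum>T\<in>Ep. T)"
  define GB where "GB = (\<Sum>T\<in>Em. T)"
  have hA: "finite GA \<and> GA \<noteq> {} \<and> hm GA w = (\<Sum>T\<in>Ep. hm T w)" for w
    unfolding GA_def using hm_sum[OF finEp(1), of id] TE EpE by auto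
  have hB: "finite GB \<and> GB \<noteq> {} \<and> hm GB w = (\<Sum>T\<in>Em. hm T w)" for w
    unfolding GB_def using hm_sum[OF finEp(2), of id] TE EpE by auto
  define NS where "NS = uminus ` S"
  have finNS: "finite NS" "NS \<noteq> {}" using fin ne by (auto simp: NS_def)
  have hAN: "hm (GA + NS) w = hm GB w" for w
  proof -
    have lw: "linear (\<lambda>x. inner w x)" by (rule bounded_linear.linear[OF bounded_linear_inner_right])
    have si: "(\<Sum>T\<in>E. real_of_int (sg (aff_dim (id ` T))) * Max ((\<lambda>i. inner w (id i)) ` T))
         = Min ((\<lambda>i. inner w (id i)) ` S)"
      unfolding E_def by (rule support_identity[OF fin ne lw])
    have "(\<Sum>T\<in>E. real_of_int (sg (aff_dim (id ` T))) * Max ((\<lambda>i. inner w (id i)) ` T))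
        = (\<Sum>T\<in>E. if even (aff_dim T) then hm T w else - hm T w)"
      by (rule sum.cong[OF refl]) (simp add: sg_def hm_def)
    also have "\<dots> = (\<Sum>T\<in>Ep. hm T w) - (\<Sum>T\<in>Em. hm T w)"
    proof -
      have "E \<inter> {T. even (aff_dim T)} = Ep" "E \<inter> - {T. even (aff_dim T)} = Em"
        by (auto simp: Ep_def Em_def)
      then show ?thesis by (simp add: sum.If_cases[OF finE] sum_negf)
    qed
    finally have "(\<Sum>T\<in>Ep. hm T w) - (\<Sum>T\<in>Em. hm T w) = Min ((\<lambda>x. inner w x) ` S)"
      using si by simp
    moreover have "hm (GA + NS) w = hm GA w + hm NS w"
      using hm_plus hA finNS by blast
    moreover have "hm NS w = - Min ((\<lambda>x. inner w x) ` S)" unfolding NS_def by (rule hm_neg[OF fin ne])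
    ultimately show ?thesis using hA hB by simp
  qed
  have finAN: "finite (GA + NS)" "GA + NS \<noteq> {}"
    using hA finNS by (auto simp: finite_set_plus set_plus_def)
  have eqhull: "convex hull (GA + NS) = convex hull GB"
  proof
    show "convex hull (GA + NS) \<subseteq> convex hull GB"
      by (rule hm_le_hull_sub) (use finAN hB hAN in auto)
    show "convex hull GB \<subseteq> convex hull (GA + NS)"
      by (rule hm_le_hull_sub) (use finAN hB hAN in auto)
  qed
  have cA: "(\<Sum>T\<in>Ep. convex hull T) = convex hull GA" unfolding GA_def using hull_sum[OF finEp(1), of id] by simp
  have cB: "(\<Sum>T\<in>Em. convex hull T) = convex hull GB" unfolding GB_def using hull_sum[OF finEp(2), of id] by simp
  have pA: "pclass (convex hull GA) = (\<Sum>T\<in>Ep. pclass (convex hull T))"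
    using pclass_sum[OF finEp(1), of "\<lambda>T. convex hull T"] TE EpE ptope_hull cA by auto
  have pB: "pclass (convex hull GB) = (\<Sum>T\<in>Em. pclass (convex hull T))"
    using pclass_sum[OF finEp(2), of "\<lambda>T. convex hull T"] TE EpE ptope_hull cB by auto
  have negS: "uminus ` (convex hull S) = convex hull NS"
    unfolding NS_def by (rule convex_hull_linear_image[OF linear_uminus])
  have "pclass (convex hull GA) + pclass (uminus ` (convex hull S)) = pclass (convex hull GA + convex hull NS)"
    unfolding negS using hA finNS by (simp add: pclass_add ptope_hull)
  also have "convex hull GA + convex hull NS = convex hull GB"
    using eqhull by (simp add: convex_hull_set_plus)
  finally have K: "pclass (convex hull GA) + pclass (uminus ` (convex hull S)) = pclass (convex hull GB)" .
  show ?thesis using L K pA pB unfolding g_def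
    by (metis add_diff_cancel_left' diff_add_cancel minus_diff_eq add.commute diff_diff_eq2 add_uminus_conv_diff)
qed



theorem corollary5p3:
  fixes P :: "'a::euclidean_space set"
  assumes "ptope P" and "uminus ` P = P"
  shows "(\<Sum>F \<in> faces P - {P}. (if even (aff_dim F) then pclass F else - pclass F))
           = (if odd (aff_dim P) then 0 else - (pclass P + pclass P))"
proof -
  obtain S where S: "finite S" "S \<noteq> {}" "P = convex hull S" using assms(1) unfolding ptope_def by blast
  define g where "g F = (if even (aff_dim F) then pclass F else - pclass F)" for F :: "'a set"
  have fF: "finite (faces P)" unfolding S(3) faces_exs(1)[OF S(1,2)] using finite_exs[OF S(1), of id] by simp
  have PF: "P \<in> faces P" unfolding S(3) faces_exs(1)[OF S(1,2)] using exs_top[of S id] by blast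
  have full: "(\<Sum>F\<in>faces P. g F) = - pclass P"
    using euler_general[OF S(1,2)] assms(2) unfolding g_def S(3) by simp
  have "(\<Sum>F\<in>faces P. g F) = g P + (\<Sum>F\<in>faces P - {P}. g F)"
    using sum.remove[OF fF PF] .
  then have "(\<Sum>F\<in>faces P - {P}. g F) = - pclass P - g P" using full by (simp add: algebra_simps)
  then show ?thesis unfolding g_def by auto
qed


end
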